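(* Fix an arbitrary execution of Algorithm $\mathrm{tree}(G)$ on $G$, and let $r$ and $F$ be as defined in the context. If $uv$ is an edge of $G$ with $d_F(u)\ge 2$, then $r(u)\ge r(v)$.
   Context: $G$ is a finite connected simple undirected graph containing a vertex $a$ with $d_G(a)\ge 2$. For a subtree $T$ of $G$ and a vertex $u$ of $T$: - $V_T(u)$ is the set of vertices $v\in V(G)\setminus V(T)$ with $uv\in E(G)$. - $E_T(u)$ is the set of edges $uv$ of $G$ with $v\in V_T(u)$. - If $|V_T(u)|=1$, then $v_T(u)$ denotes the unique vertex of $V_T(u)$. Three sets of vertices of $T$ are defined: - $W_2(T)=\{u\in V(T): |V_T(u)|\ge 2\}$. - $W_1(T)=\{u\in V(T): |V_T(u)|=1,\ |V_{T\cup E_T(u)}(v_T(u))|\ge 2\}$. - $W_0(T)=\{u\in V(T): |V_T(u)|=1,\ |V_{T\cup E_T(u)}(v_T(u))|\le 1\}$. Algorithm $\mathrm{tree}(G)$ runs as follows. 1. Start with $T=\{a\}$. 2. While $V(T)\ne V(G)$: - If $W_2(T)\ne\emptyset$, pick an arbitrary $u\in W_2(T)$. - Else, if $W_1(T)\neq\emptyset$, pick an arbitrary $u\in W_1(T)$. - Else, let $u$ be the vertex of $W_0(T)$ that joined $V(T)$ most recently. - Set $T:=T\cup E_T(u)$ ("expand $T$ at $u$"). 3. Return $T$. Now fix an execution and let $T$ be the returned spanning tree, rooted at $a$. For $v\ne a$, let $p(v)$ be the parent of $v$ in $T$. For each vertex $u$ with $d_T(u)\ge 2$, let $T_u$ be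 the tree just before the (unique) expansion at $u$. The rank $r:V(G)\to\mathbb{Z}$ is defined by $r(a)=1$ and, for each edge $uv$ of $T$ with $u=p(v)$: - $r(v)=r(u)$ if $u\in W_2(T_u)$; - $r(v)=1+\max_{w\in V(T_u)} r(w)$ otherwise. $F$ is the spanning forest obtained from $T$ by deleting every edge $uv$ with $r(u)\ne r(v)$, and $d_F(u)$ denotes the degree of $u$ in $F$. *)

theory Defs
  imports Main
begin

definition simple_graph :: "'a set \<Rightarrow> ('a \<Rightarrow> 'a \<Rightarrow> bool) \<Rightarrow> bool" where
  "simple_graph V E \<longleftrightarrow> finite V \<and> (\<forall>x y. E x y \<longrightarrow> x \<in> V \<and> y \<in> V)
     \<and> (\<forall>x y. E x y \<longrightarrow> E y x) \<and> (\<forall>x. \<not> E x x)"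

definition connected_graph :: "'a set \<Rightarrow> ('a \<Rightarrow> 'a \<Rightarrow> bool) \<Rightarrow> bool" where
  "connected_graph V E \<longleftrightarrow> (\<forall>x\<in>V. \<forall>y\<in>V. (x, y) \<in> {(p, q). E p q}\<^sup>*)"

definition outN :: "('a \<Rightarrow> 'a \<Rightarrow> bool) \<Rightarrow> 'a set \<Rightarrow> 'a \<Rightarrow> 'a set" where
  "outN E S u = {v. E u v \<and> v \<notin> S}"

text \<open>State of the algorithm: vertex set of T, set of tree edges as (parent, child) pairs,
  rank function (ranks of the vertices of T).\<close>
type_synonym 'a state = "'a set \<times> ('a \<times> 'a) set \<times> ('a \<Rightarrow> int)"

definition expand :: "('a \<Rightarrow> 'a \<Rightarrow> bool) \<Rightarrow> 'a state \<Rightarrow> 'a \<Rightarrow> 'a state" where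
  "expand E st u = (case st of (S, P, r) \<Rightarrow>
     (let N = outN E S u in
       (S \<union> N, P \<union> {(u, v) | v. v \<in> N},
        (\<lambda>w. if w \<in> N then (if card N \<ge> 2 then r u else 1 + Max (r ` S)) else r w))))"

definition run :: "('a \<Rightarrow> 'a \<Rightarrow> bool) \<Rightarrow> 'a \<Rightarrow> 'a list \<Rightarrow> 'a state" where
  "run E a xs = foldl (expand E) ({a}, {}, (\<lambda>_. 1)) xs"

definition tverts :: "('a \<Rightarrow> 'a \<Rightarrow> bool) \<Rightarrow> 'a \<Rightarrow> 'a list \<Rightarrow> 'a set" where
  "tverts E a xs = fst (run E a xs)"

definition tedges :: "('a \<Rightarrow> 'a \<Rightarrow> bool) \<Rightarrow> 'a \<Rightarrow> 'a list \<Rightarrow> ('a \<times> 'a) set" where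
  "tedges E a xs = fst (snd (run E a xs))"

definition rank :: "('a \<Rightarrow> 'a \<Rightarrow> bool) \<Rightarrow> 'a \<Rightarrow> 'a list \<Rightarrow> 'a \<Rightarrow> int" where
  "rank E a xs = snd (snd (run E a xs))"

definition join_time :: "('a \<Rightarrow> 'a \<Rightarrow> bool) \<Rightarrow> 'a \<Rightarrow> 'a list \<Rightarrow> 'a \<Rightarrow> nat" where
  "join_time E a xs w = (LEAST j. w \<in> tverts E a (take j xs))"

definition W2 :: "('a \<Rightarrow> 'a \<Rightarrow> bool) \<Rightarrow> 'a set \<Rightarrow> 'a set" where
  "W2 E S = {u \<in> S. card (outN E S u) \<ge> 2}"

definition W1 :: "('a \<Rightarrow> 'a \<Rightarrow> bool) \<Rightarrow> 'a set \<Rightarrow> 'a set" where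
  "W1 E S = {u \<in> S. card (outN E S u) = 1 \<and>
       card (outN E (S \<union> outN E S u) (the_elem (outN E S u))) \<ge> 2}"

definition W0 :: "('a \<Rightarrow> 'a \<Rightarrow> bool) \<Rightarrow> 'a set \<Rightarrow> 'a set" where
  "W0 E S = {u \<in> S. card (outN E S u) = 1 \<and>
       card (outN E (S \<union> outN E S u) (the_elem (outN E S u))) \<le> 1}"

definition choice_ok :: "('a \<Rightarrow> 'a \<Rightarrow> bool) \<Rightarrow> 'a \<Rightarrow> 'a list \<Rightarrow> 'a \<Rightarrow> bool" where
  "choice_ok E a pre u = (let S = tverts E a pre in
     (if W2 E S \<noteq> {} then u \<in> W2 E S
      else if W1 E S \<noteq> {} then u \<in> W1 E S
      else u \<in> W0 E S \<and> (\<forall>w \<in> W0 E S. join_time E a pre w \<le> join_time E a pre u)))"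

definition tree_exec :: "'a set \<Rightarrow> ('a \<Rightarrow> 'a \<Rightarrow> bool) \<Rightarrow> 'a \<Rightarrow> 'a list \<Rightarrow> bool" where
  "tree_exec V E a xs \<longleftrightarrow>
     (\<forall>i < length xs. tverts E a (take i xs) \<noteq> V \<and> choice_ok E a (take i xs) (xs ! i))
     \<and> tverts E a xs = V"

text \<open>Degree in the forest F: tree edges whose endpoints have equal rank.\<close>
definition degF :: "('a \<Rightarrow> 'a \<Rightarrow> bool) \<Rightarrow> 'a \<Rightarrow> 'a list \<Rightarrow> 'a \<Rightarrow> nat" where
  "degF E a xs u = card {v. ((u, v) \<in> tedges E a xs \<or> (v, u) \<in> tedges E a xs)
                          \<and> rank E a xs u = rank E a xs v}"

end

theory Submission
  imports Defs
begin

definition Inv :: "'a set \<Rightarrow> ('a \<Rightarrow> 'a \<Rightarrow> bool) \<Rightarrow> 'a \<Rightarrow> 'a state \<Rightarrow> bool" where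
  "Inv V E a st = (case st of (S, P, r) \<Rightarrow>
     S \<subseteq> V \<and> a \<in> S \<and> (\<forall>w\<in>W2 E S. r w = Max (r ` S))
     \<and> (\<forall>x y. (x,y) \<in> P \<longrightarrow> x \<in> S \<and> y \<in> S)
     \<and> (\<forall>x y1 y2. (y1,x) \<in> P \<longrightarrow> (y2,x) \<in> P \<longrightarrow> y1 = y2)
     \<and> (\<forall>x y. (x,y) \<in> P \<longrightarrow> r y = r x \<longrightarrow> (\<forall>z. E x z \<longrightarrow> z \<in> S \<and> r z \<le> r x)))"

lemma choice_facts:
  assumes "choice_ok E a pre u"
  shows "u \<in> tverts E a pre \<and> (W2 E (tverts E a pre) \<noteq> {} \<longrightarrow> u \<in> W2 E (tverts E a pre))"
  using assms unfolding choice_ok_def Let_def W2_def W1_def W0_def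
  by (auto split: if_splits)

lemma step:
  assumes g: "simple_graph V E" and inv: "Inv V E a (S, P, r)" and uS: "u \<in> S"
    and w2: "W2 E S \<noteq> {} \<longrightarrow> u \<in> W2 E S"
  shows "Inv V E a (expand E (S, P, r) u)"
proof -
  have fV: "finite V" and EV: "\<And>x y. E x y \<Longrightarrow> x \<in> V \<and> y \<in> V"
    using g unfolding simple_graph_def by auto
  define N where "N = outN E S u"
  define S' where "S' = S \<union> N"
  define P' where "P' = P \<union> {(u, v) | v. v \<in> N}"
  define r' where "r' = (\<lambda>w. if w \<in> N then (if card N \<ge> 2 then r u else 1 + Max (r ` S)) else r w)"
  have ex: "expand E (S, P, r) u = (S', P', r')"
    unfolding expand_def N_def S'_def P'_def r'_def Let_def by simp
  have SV: "S \<subseteq> V" and aS: "a \<in> S" and I2: "\<forall>w\<in>W2 E S. r w = Max (r ` S)"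
    and I3: "\<forall>x y. (x,y) \<in> P \<longrightarrow> x \<in> S \<and> y \<in> S"
    and I4: "\<forall>x y1 y2. (y1,x) \<in> P \<longrightarrow> (y2,x) \<in> P \<longrightarrow> y1 = y2"
    and I5: "\<forall>x y. (x,y) \<in> P \<longrightarrow> r y = r x \<longrightarrow> (\<forall>z. E x z \<longrightarrow> z \<in> S \<and> r z \<le> r x)"
    using inv unfolding Inv_def by auto
  have fS: "finite S" using SV fV finite_subset by blast
  have NV: "N \<subseteq> V" unfolding N_def outN_def using EV by auto
  have fN: "finite N" using NV fV finite_subset by blast
  have NS: "N \<inter> S = {}" unfolding N_def outN_def by auto
  have r'S: "\<And>w. w \<in> S \<Longrightarrow> r' w = r w" unfolding r'_def using NS by auto
  have outsub: "\<And>w. outN E S' w \<subseteq> outN E S w" unfolding outN_def S'_def by auto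
  have fout: "\<And>w. finite (outN E S w)" unfolding outN_def using EV fV
    by (metis (no_types, lifting) finite_subset mem_Collect_eq subsetI)
  have rmax: "\<And>w. w \<in> S \<Longrightarrow> r w \<le> Max (r ` S)" using fS by auto
  have S'V: "S' \<subseteq> V" using SV NV S'_def by auto
  have aS': "a \<in> S'" using aS S'_def by auto
  have J3: "\<forall>x y. (x,y) \<in> P' \<longrightarrow> x \<in> S' \<and> y \<in> S'"
    using I3 uS unfolding P'_def S'_def by auto
  have J4: "\<forall>x y1 y2. (y1,x) \<in> P' \<longrightarrow> (y2,x) \<in> P' \<longrightarrow> y1 = y2"
    using I4 I3 NS unfolding P'_def by auto
  have J2: "\<forall>w\<in>W2 E S'. r' w = Max (r' ` S')"
  proof (cases "card N \<ge> 2")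
    case True
    have uW: "u \<in> W2 E S" using True uS unfolding W2_def N_def by auto
    hence ru: "r u = Max (r ` S)" using I2 by auto
    have Nne: "N \<noteq> {}" using True by auto
    have img: "r' ` S' = r ` S"
    proof
      show "r' ` S' \<subseteq> r ` S" using uS r'S unfolding S'_def by (auto simp: r'_def True)
      show "r ` S \<subseteq> r' ` S'" using r'S unfolding S'_def by force
    qed
    show ?thesis
    proof
      fix w assume w: "w \<in> W2 E S'"
      show "r' w = Max (r' ` S')"
      proof (cases "w \<in> N")
        case True
        then show ?thesis using img ru \<open>2 \<le> card N\<close> by (simp add: r'_def)
      next
        case False
        hence wS: "w \<in> S" using w unfolding W2_def S'_def by auto
        have "card (outN E S' w) \<le> card (outN E S w)" using outsub fout card_mono by blast
        hence "w \<in> W2 E S" using w wS unfolding W2_def by auto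
        then show ?thesis using I2 img r'S wS by auto
      qed
    qed
  next
    case False
    have W2e: "W2 E S = {}"
    proof (rule ccontr)
      assume "W2 E S \<noteq> {}"
      hence "u \<in> W2 E S" using w2 by auto
      thus False using False unfolding W2_def N_def by auto
    qed
    show ?thesis
    proof
      fix w assume w: "w \<in> W2 E S'"
      have wN: "w \<in> N"
      proof (rule ccontr)
        assume "w \<notin> N"
        hence wS: "w \<in> S" using w unfolding W2_def S'_def by auto
        have "card (outN E S' w) \<le> card (outN E S w)" using outsub fout card_mono by blast
        hence "w \<in> W2 E S" using w wS unfolding W2_def by auto
        thus False using W2e by auto
      qed
      have img: "r' ` S' = insert (1 + Max (r ` S)) (r ` S)"
      proof
        show "r' ` S' \<subseteq> insert (1 + Max (r ` S)) (r ` S)"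
          using r'S False unfolding S'_def by (auto simp: r'_def)
        show "insert (1 + Max (r ` S)) (r ` S) \<subseteq> r' ` S'"
        proof -
          have "r' w = 1 + Max (r ` S)" using wN False by (simp add: r'_def)
          moreover have "w \<in> S'" using wN S'_def by auto
          ultimately have "1 + Max (r ` S) \<in> r' ` S'" by force
          moreover have "r ` S \<subseteq> r' ` S'" using r'S unfolding S'_def by force
          ultimately show ?thesis by auto
        qed
      qed
      have "Max (r' ` S') = max (1 + Max (r ` S)) (Max (r ` S))"
        unfolding img using fS aS by (subst Max_insert) auto
      also have "\<dots> = 1 + Max (r ` S)" by simp
      finally show "r' w = Max (r' ` S')" using wN False by (simp add: r'_def)
    qed
  qed
  have J5: "\<forall>x y. (x,y) \<in> P' \<longrightarrow> r' y = r' x \<longrightarrow> (\<forall>z. E x z \<longrightarrow> z \<in> S' \<and> r' z \<le> r' x)"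
  proof (intro allI impI)
    fix x y z assume xy: "(x,y) \<in> P'" and req: "r' y = r' x" and exz: "E x z"
    show "z \<in> S' \<and> r' z \<le> r' x"
    proof (cases "(x,y) \<in> P")
      case True
      hence "x \<in> S" "y \<in> S" using I3 by auto
      hence "r y = r x" using req r'S by auto
      hence "z \<in> S \<and> r z \<le> r x" using I5 True exz by blast
      thus ?thesis using r'S \<open>x \<in> S\<close> S'_def by auto
    next
      case False
      hence xu: "x = u" and yN: "y \<in> N" using xy unfolding P'_def by auto
      show ?thesis
      proof (cases "card N \<ge> 2")
        case True
        have uW: "u \<in> W2 E S" using True uS unfolding W2_def N_def by auto
        hence ru: "r u = Max (r ` S)" using I2 by auto
        have ru': "r' u = r u" using r'S uS by auto
        show ?thesis
        proof (cases "z \<in> S")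
          case True
          thus ?thesis using r'S rmax ru ru' xu S'_def by auto
        next
          case False
          hence "z \<in> N" using exz xu unfolding N_def outN_def by auto
          thus ?thesis using ru' xu \<open>2 \<le> card N\<close> S'_def by (auto simp: r'_def)
        qed
      next
        case False
        have "r' y = 1 + Max (r ` S)" using yN False by (simp add: r'_def)
        moreover have "r' x = r u" using xu r'S uS by auto
        ultimately have False using req rmax uS by force
        thus ?thesis by simp
      qed
    qed
  qed
  show ?thesis unfolding ex Inv_def using S'V aS' J2 J3 J4 J5 by auto
qed

lemma inv_run:
  assumes g: "simple_graph V E" and aV: "a \<in> V" and te: "tree_exec V E a xs"
  shows "i \<le> length xs \<Longrightarrow> Inv V E a (run E a (take i xs))"
proof (induction i)
  case 0
  have "{a} \<subseteq> V" using aV by auto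
  moreover have "W2 E {a} \<subseteq> {a}" unfolding W2_def by auto
  ultimately show ?case unfolding run_def Inv_def by auto
next
  case (Suc i)
  hence il: "i < length xs" by auto
  have co: "choice_ok E a (take i xs) (xs ! i)" using te il unfolding tree_exec_def by auto
  have tk: "take (Suc i) xs = take i xs @ [xs ! i]" using il by (simp add: take_Suc_conv_app_nth)
  have r: "run E a (take (Suc i) xs) = expand E (run E a (take i xs)) (xs ! i)"
    unfolding tk run_def by simp
  obtain S P rr where st: "run E a (take i xs) = (S, P, rr)" by (cases "run E a (take i xs)") auto
  have tv: "tverts E a (take i xs) = S" using st unfolding tverts_def by simp
  have inv: "Inv V E a (S, P, rr)" using Suc il st by auto
  show ?case unfolding r st
    using step[OF g inv] choice_facts[OF co] tv by auto
qed

theorem lemma3: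
  fixes V :: "'a set" and E :: "'a \<Rightarrow> 'a \<Rightarrow> bool" and a :: 'a and xs :: "'a list"
  assumes "simple_graph V E" and "connected_graph V E"
    and "a \<in> V" and "card {v. E a v} \<ge> 2"
    and "tree_exec V E a xs"
    and "E u v" and "degF E a xs u \<ge> 2"
  shows "rank E a xs u \<ge> rank E a xs v"
proof -
  obtain S P r where st: "run E a xs = (S, P, r)" by (cases "run E a xs") auto
  have inv: "Inv V E a (S, P, r)" using inv_run[OF assms(1,3,5), of "length xs"] st by simp
  have I4: "\<forall>x y1 y2. (y1,x) \<in> P \<longrightarrow> (y2,x) \<in> P \<longrightarrow> y1 = y2"
    and I5: "\<forall>x y. (x,y) \<in> P \<longrightarrow> r y = r x \<longrightarrow> (\<forall>z. E x z \<longrightarrow> z \<in> S \<and> r z \<le> r x)"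
    using inv unfolding Inv_def by auto
  define D where "D = {v. ((u, v) \<in> P \<or> (v, u) \<in> P) \<and> r u = r v}"
  have "card D \<ge> 2" using assms(7) st unfolding degF_def D_def tedges_def rank_def by simp
  then obtain v1 v2 where v: "v1 \<in> D" "v2 \<in> D" "v1 \<noteq> v2"
    by (metis One_nat_def Suc_1 card_le_Suc_iff not_less_eq_eq zero_less_one_class.zero_le_one card.infinite le_zero_eq nat.simps(3) insert_iff)
  have "\<exists>y. (u, y) \<in> P \<and> r y = r u"
    using v I4 unfolding D_def by auto
  then have "r v \<le> r u" using I5 assms(6) by blast
  thus ?thesis using st unfolding rank_def by simp
qed

end
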